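(* Let $S_1\subseteq S$ with $|S_1|>1$. Let $\beta\in(0,1/2^{|S|})$, $a>0$, and $\varepsilon\in\left(0,\frac12\left(\frac{a}{L}\right)^{|S|}\frac{\beta(1-\beta)}{L\,|S|^4}\right)$. Let $q$ be an irreducible transition matrix on $S$ such that $\mathbf P_{s,q}\big(T^+_{\overline{S_1}\cup\{t\}}=T^+_{\{t\}}\big)\ge a$ for all $s,t\in S_1$. Let $\widehat q$ be a transition matrix on $S$ that is $(\varepsilon,\beta)$-close to $q$ on $S_1$ and satisfies $\widehat q(t\mid s)=q(t\mid s)$ for all $s\in S\setminus S_1$, $t\in S$. Then: (1) all states of $S_1$ belong to the same recurrent class $R$ of $\widehat q$; (2) the stationary distribution $\widehat\mu$ of $\widehat q$ on $R$ satisfies $\left|1-\frac{\widehat\mu(s\mid S_1)}{\mu(s\mid S_1)}\right|\le 18\beta L$ for every $s\in S_1$, where $\mu(s\mid S_1)=\mu_s/\mu_{S_1}$ and $\widehat\mu(s\mid S_1)=\widehat\mu_s/\widehat\mu_{S_1}$.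
   Context: $S$ is a finite set with $|S|\ge 2$. A transition matrix on $S$ is $q=(q(t\mid s))_{s,t\in S}$ with nonnegative entries and rows summing to $1$; $q(D\mid s)=\sum_{t\in D}q(t\mid s)$, $\overline C=S\setminus C$. For irreducible $q$, $\mu$ is its stationary distribution and $\mu_C=\sum_{s\in C}\mu_s$. $(\mathbf s_n)_{n\ge0}$ is a Markov chain with transition matrix $q$, $\mathbf P_{s,q}$ its law when $\mathbf s_0=s$; for $C\subsetneq S$, $T^+_C=\min\{n\ge1:\mathbf s_n\in C\}$ (with $\min\emptyset=+\infty$). Define $\zeta^1_q=\min_{\emptyset\neq C\subsetneq S_1}\sum_{s\in C}\mu_s q(\overline C\mid s)$. Given $\varepsilon,\beta>0$, $\widehat q$ is $(\varepsilon,\beta)$-close to $q$ on $S_1$ if for all $s,t\in S$, $\left|1-\frac{\widehat q(t\mid s)}{q(t\mid s)}\right|\le\beta$ whenever (a) $\mu_s q(t\mid s)\ge\varepsilon\zeta^1_q$ or (b) $\mu_s\widehat q(t\mid s)\ge\varepsilon\zeta^1_q$ (in case (b) this requires in particular $q(t\mid s)>0$). $L=\sum_{n=1}^{|S|-1}\binom{|S|}{n}n^{|S|}$. The stationary distribution of $\widehat q$ on $R$ is viewed as a distribution on $S$ vanishing outside $R$. *)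

theory Defs
  imports Complex_Main "HOL-Library.Cardinality"
begin

text \<open>The state space S is a finite type 's; a transition matrix is q :: 's => 's => real,
  with q s t standing for q(t | s).\<close>

definition transition_matrix :: "('s::finite \<Rightarrow> 's \<Rightarrow> real) \<Rightarrow> bool" where
  "transition_matrix q \<longleftrightarrow> (\<forall>s t. 0 \<le> q s t) \<and> (\<forall>s. (\<Sum>t\<in>UNIV. q s t) = 1)"

definition irreducible :: "('s::finite \<Rightarrow> 's \<Rightarrow> real) \<Rightarrow> bool" where
  "irreducible q \<longleftrightarrow> (\<forall>s t. (s, t) \<in> {(x, y). 0 < q x y}\<^sup>*)"

definition stationary :: "('s::finite \<Rightarrow> 's \<Rightarrow> real) \<Rightarrow> ('s \<Rightarrow> real) \<Rightarrow> bool" where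
  "stationary q \<mu> \<longleftrightarrow> (\<forall>s. 0 \<le> \<mu> s) \<and> (\<Sum>s\<in>UNIV. \<mu> s) = 1 \<and>
     (\<forall>t. (\<Sum>s\<in>UNIV. \<mu> s * q s t) = \<mu> t)"

text \<open>The stationary distribution of an irreducible q (unique in that case).\<close>
definition stat_dist :: "('s::finite \<Rightarrow> 's \<Rightarrow> real) \<Rightarrow> 's \<Rightarrow> real" where
  "stat_dist q = (THE \<mu>. stationary q \<mu>)"

definition recurrent_class :: "('s::finite \<Rightarrow> 's \<Rightarrow> real) \<Rightarrow> 's set \<Rightarrow> bool" where
  "recurrent_class q R \<longleftrightarrow> R \<noteq> {} \<and>
     (\<forall>x\<in>R. \<forall>y\<in>R. (x, y) \<in> {(u, v). 0 < q u v}\<^sup>*) \<and>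
     (\<forall>x\<in>R. \<forall>y. 0 < q x y \<longrightarrow> y \<in> R)"

text \<open>first_entrance q C n s t = P_{s,q}(T^+_C = n and s_n = t): the probability of a path
  s = s_0, s_1, ..., s_n with s_1, ..., s_(n-1) outside C and s_n = t in C.\<close>
fun first_entrance :: "('s::finite \<Rightarrow> 's \<Rightarrow> real) \<Rightarrow> 's set \<Rightarrow> nat \<Rightarrow> 's \<Rightarrow> 's \<Rightarrow> real" where
  "first_entrance q C 0 s t = 0"
| "first_entrance q C (Suc 0) s t = (if t \<in> C then q s t else 0)"
| "first_entrance q C (Suc (Suc n)) s t = (\<Sum>u\<in>-C. q s u * first_entrance q C (Suc n) u t)"

text \<open>P_{s,q}(T^+_C < infinity and s_{T^+_C} = t).\<close>
definition hit_at :: "('s::finite \<Rightarrow> 's \<Rightarrow> real) \<Rightarrow> 's set \<Rightarrow> 's \<Rightarrow> 's \<Rightarrow> real" where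
  "hit_at q C s t = (\<Sum>n. first_entrance q C n s t)"

text \<open>P_{s,q}(T^+_C = T^+_{t}) for t in C: either T^+_C is finite and the chain is at t then,
  or T^+_C = T^+_{t} = infinity.\<close>
definition prob_first_hit_eq :: "('s::finite \<Rightarrow> 's \<Rightarrow> real) \<Rightarrow> 's set \<Rightarrow> 's \<Rightarrow> 's \<Rightarrow> real" where
  "prob_first_hit_eq q C t s = hit_at q C s t + (1 - (\<Sum>u\<in>C. hit_at q C s u))"

definition zeta1 :: "('s::finite \<Rightarrow> 's \<Rightarrow> real) \<Rightarrow> 's set \<Rightarrow> real" where
  "zeta1 q S1 = Min {(\<Sum>s\<in>C. stat_dist q s * (\<Sum>t\<in>-C. q s t)) | C. C \<noteq> {} \<and> C \<subset> S1}"

definition eps_beta_close ::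
  "real \<Rightarrow> real \<Rightarrow> ('s::finite \<Rightarrow> 's \<Rightarrow> real) \<Rightarrow> ('s \<Rightarrow> 's \<Rightarrow> real) \<Rightarrow> 's set \<Rightarrow> bool" where
  "eps_beta_close \<epsilon> \<beta> qh q S1 \<longleftrightarrow> (\<forall>s t.
     (stat_dist q s * q s t \<ge> \<epsilon> * zeta1 q S1 \<longrightarrow> \<bar>1 - qh s t / q s t\<bar> \<le> \<beta>) \<and>
     (stat_dist q s * qh s t \<ge> \<epsilon> * zeta1 q S1 \<longrightarrow> 0 < q s t \<and> \<bar>1 - qh s t / q s t\<bar> \<le> \<beta>))"

definition Lconst :: "nat \<Rightarrow> real" where
  "Lconst N = (\<Sum>n=1..N-1. real (N choose n) * real n ^ N)"

end

theory Submission
  imports Defs "HOL-Analysis.Cartesian_Space"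
begin

lemma exists_invariant:
  fixes q :: "'s::finite \<Rightarrow> 's \<Rightarrow> real"
  assumes "transition_matrix q"
  shows "\<exists>x. x \<noteq> (\<lambda>_. 0) \<and> (\<forall>t. (\<Sum>s\<in>UNIV. x s * q s t) = x t)"
proof -
  define f :: "real^'s \<Rightarrow> real^'s" where "f = (\<lambda>x. \<chi> t. x$t - (\<Sum>s\<in>UNIV. x$s * q s t))"
  have lin: "linear f"
    unfolding f_def
    by (rule linearI) (auto simp: vec_eq_iff algebra_simps sum.distrib sum_distrib_left)
  have rs: "\<And>s. (\<Sum>t\<in>UNIV. q s t) = 1" using assms by (simp add: transition_matrix_def)
  obtain t0 :: 's where True by auto
  have nsurj: "\<not> surj f"
  proof
    assume "surj f"
    then obtain x where fx: "f x = (\<chi> t. if t = t0 then 1 else 0)" by (metis surjD)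
    have "(\<Sum>t\<in>UNIV. (f x)$t) = (\<Sum>t\<in>UNIV. x$t) - (\<Sum>t\<in>UNIV. \<Sum>s\<in>UNIV. x$s * q s t)"
      by (simp add: f_def sum_subtractf)
    also have "(\<Sum>t\<in>UNIV. \<Sum>s\<in>UNIV. x$s * q s t) = (\<Sum>s\<in>UNIV. x$s * (\<Sum>t\<in>UNIV. q s t))"
      by (subst sum.swap) (simp add: sum_distrib_left)
    also have "\<dots> = (\<Sum>s\<in>UNIV. x$s)" by (simp add: rs)
    finally have "(\<Sum>t\<in>UNIV. (f x)$t) = 0" by simp
    moreover have "(\<Sum>t\<in>UNIV. (f x)$t) = 1" unfolding fx by simp
    ultimately show False by simp
  qed
  have "\<not> inj f" using nsurj linear_injective_imp_surjective[OF lin] by blast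
  then obtain x where x: "f x = 0" "x \<noteq> 0" using linear_injective_0[OF lin] by blast
  show ?thesis
  proof (intro exI conjI allI)
    show "(\<lambda>s. x$s) \<noteq> (\<lambda>_. 0)" using x(2) by (auto simp: vec_eq_iff)
    fix t
    have "(f x)$t = 0" using x(1) by simp
    then show "(\<Sum>s\<in>UNIV. x$s * q s t) = x$t" by (simp add: f_def)
  qed
qed

lemma sum_UNIV_split:
  fixes f :: "'s::finite \<Rightarrow> real"
  shows "(\<Sum>x\<in>UNIV. f x) = (\<Sum>x\<in>C. f x) + (\<Sum>x\<in>-C. f x)"
proof -
  have "UNIV = C \<union> -C" by auto
  then have "(\<Sum>x\<in>UNIV. f x) = (\<Sum>x\<in>C \<union> -C. f x)" by simp
  also have "\<dots> = (\<Sum>x\<in>C. f x) + (\<Sum>x\<in>-C. f x)"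
    by (rule sum.union_disjoint) auto
  finally show ?thesis .
qed

lemma abs_invariant:
  fixes q :: "'s::finite \<Rightarrow> 's \<Rightarrow> real"
  assumes tm: "transition_matrix q" and inv: "\<forall>t. (\<Sum>s\<in>UNIV. x s * q s t) = x t"
  shows "\<forall>t. (\<Sum>s\<in>UNIV. \<bar>x s\<bar> * q s t) = \<bar>x t\<bar>"
proof -
  have qn: "\<And>s t. 0 \<le> q s t" and rs: "\<And>s. (\<Sum>t\<in>UNIV. q s t) = 1"
    using tm by (auto simp: transition_matrix_def)
  have le: "\<bar>x t\<bar> \<le> (\<Sum>s\<in>UNIV. \<bar>x s\<bar> * q s t)" for t
  proof -
    have "\<bar>x t\<bar> = \<bar>\<Sum>s\<in>UNIV. x s * q s t\<bar>" using inv by simp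
    also have "\<dots> \<le> (\<Sum>s\<in>UNIV. \<bar>x s * q s t\<bar>)" by (rule sum_abs)
    also have "\<dots> = (\<Sum>s\<in>UNIV. \<bar>x s\<bar> * q s t)" using qn by (simp add: abs_mult)
    finally show ?thesis .
  qed
  have "(\<Sum>t\<in>UNIV. (\<Sum>s\<in>UNIV. \<bar>x s\<bar> * q s t) - \<bar>x t\<bar>) =
        (\<Sum>t\<in>UNIV. \<Sum>s\<in>UNIV. \<bar>x s\<bar> * q s t) - (\<Sum>t\<in>UNIV. \<bar>x t\<bar>)"
    by (simp add: sum_subtractf)
  also have "(\<Sum>t\<in>UNIV. \<Sum>s\<in>UNIV. \<bar>x s\<bar> * q s t) = (\<Sum>s\<in>UNIV. \<bar>x s\<bar> * (\<Sum>t\<in>UNIV. q s t))"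
    by (subst sum.swap) (simp add: sum_distrib_left)
  finally have "(\<Sum>t\<in>UNIV. (\<Sum>s\<in>UNIV. \<bar>x s\<bar> * q s t) - \<bar>x t\<bar>) = 0" by (simp add: rs)
  then have "\<forall>t\<in>UNIV. (\<Sum>s\<in>UNIV. \<bar>x s\<bar> * q s t) - \<bar>x t\<bar> = 0"
    by (subst sum_nonneg_eq_0_iff[symmetric]) (auto simp: le)
  then show ?thesis by auto
qed

lemma pred_zero:
  fixes p :: "'s::finite \<Rightarrow> 's \<Rightarrow> real"
  assumes pn: "\<And>s t. 0 \<le> p s t" and yn: "\<And>s. 0 \<le> y s"
    and inv: "\<forall>t. (\<Sum>s\<in>UNIV. y s * p s t) = y t"
    and "y t = 0" and "0 < p s t"
  shows "y s = 0"
proof -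
  have "(\<Sum>s\<in>UNIV. y s * p s t) = 0" using inv assms(4) by simp
  then have "\<forall>s\<in>UNIV. y s * p s t = 0"
    by (subst sum_nonneg_eq_0_iff[symmetric]) (auto simp: pn yn)
  then show ?thesis using assms(5) by auto
qed

lemma path_zero:
  fixes p :: "'s::finite \<Rightarrow> 's \<Rightarrow> real"
  assumes pn: "\<And>s t. 0 \<le> p s t" and yn: "\<And>s. 0 \<le> y s"
    and inv: "\<forall>t. (\<Sum>s\<in>UNIV. y s * p s t) = y t"
    and path: "(s, t) \<in> {(x, y). 0 < p x y}\<^sup>*" and z: "y t = 0"
  shows "y s = 0"
  using path
proof (induction rule: converse_rtrancl_induct)
  case base
  then show ?case using z .
next
  case (step a b)
  then show ?case using pred_zero[OF pn yn inv, of b a] by auto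
qed

lemma pos_invariant:
  fixes q :: "'s::finite \<Rightarrow> 's \<Rightarrow> real" and y :: "'s \<Rightarrow> real"
  assumes tm: "transition_matrix q" and irr: "irreducible q"
    and yn: "\<And>s. 0 \<le> y s" and inv: "\<forall>t. (\<Sum>s\<in>UNIV. y s * q s t) = y t"
    and nz: "y s0 \<noteq> 0"
  shows "0 < y s"
proof (rule ccontr)
  assume "\<not> 0 < y s"
  then have "y s = 0" using yn[of s] by simp
  moreover have "(s0, s) \<in> {(x, y). 0 < q x y}\<^sup>*" using irr by (simp add: irreducible_def)
  moreover have "\<And>s t. 0 \<le> q s t" using tm by (simp add: transition_matrix_def)
  ultimately have "y s0 = 0" using path_zero[OF _ yn inv] by blast
  then show False using nz by simp
qed

lemma stationary_unique:
  fixes q :: "'s::finite \<Rightarrow> 's \<Rightarrow> real"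
  assumes tm: "transition_matrix q" and irr: "irreducible q"
    and m: "stationary q \<mu>" and n: "stationary q \<nu>"
  shows "\<mu> = \<nu>"
proof (rule ccontr)
  assume ne: "\<mu> \<noteq> \<nu>"
  define x where "x = (\<lambda>s. \<mu> s - \<nu> s)"
  have inv: "\<forall>t. (\<Sum>s\<in>UNIV. x s * q s t) = x t"
    using m n by (simp add: stationary_def x_def left_diff_distrib sum_subtractf)
  have ainv: "\<forall>t. (\<Sum>s\<in>UNIV. \<bar>x s\<bar> * q s t) = \<bar>x t\<bar>" by (rule abs_invariant[OF tm inv])
  define xp where "xp = (\<lambda>s. (\<bar>x s\<bar> + x s) / 2)"
  define xm where "xm = (\<lambda>s. (\<bar>x s\<bar> - x s) / 2)"
  have ipp: "\<forall>t. (\<Sum>s\<in>UNIV. xp s * q s t) = xp t"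
    using inv ainv by (simp add: xp_def add_divide_distrib distrib_right sum.distrib sum_divide_distrib[symmetric])
  have imm: "\<forall>t. (\<Sum>s\<in>UNIV. xm s * q s t) = xm t"
    using inv ainv by (simp add: xm_def diff_divide_distrib left_diff_distrib sum_subtractf sum_divide_distrib[symmetric])
  have sx: "(\<Sum>s\<in>UNIV. x s) = 0" using m n by (simp add: stationary_def x_def sum_subtractf)
  obtain s1 where s1: "x s1 \<noteq> 0" using ne by (auto simp: x_def fun_eq_iff)
  have "0 < (\<Sum>s\<in>UNIV. \<bar>x s\<bar>)"
    using s1 by (intro sum_pos2[of UNIV s1]) auto
  then have sp: "0 < (\<Sum>s\<in>UNIV. xp s)" and sm: "0 < (\<Sum>s\<in>UNIV. xm s)"
    using sx by (simp_all add: xp_def xm_def sum_divide_distrib[symmetric] sum.distrib sum_subtractf)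
  obtain a where a: "xp a \<noteq> 0"
    using sp by (metis (mono_tags, lifting) less_irrefl sum.neutral)
  obtain b where b: "xm b \<noteq> 0"
    using sm by (metis (mono_tags, lifting) less_irrefl sum.neutral)
  have "0 < xp s1" by (rule pos_invariant[OF tm irr _ ipp a]) (simp add: xp_def)
  moreover have "0 < xm s1" by (rule pos_invariant[OF tm irr _ imm b]) (simp add: xm_def)
  ultimately show False by (simp add: xp_def xm_def abs_if split: if_splits)
qed

lemma stat_dist_props:
  fixes q :: "'s::finite \<Rightarrow> 's \<Rightarrow> real"
  assumes tm: "transition_matrix q" and irr: "irreducible q"
  shows "stationary q (stat_dist q)" "\<And>s. 0 < stat_dist q s"
proof -
  obtain x where x: "x \<noteq> (\<lambda>_. 0)" "\<forall>t. (\<Sum>s\<in>UNIV. x s * q s t) = x t"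
    using exists_invariant[OF tm] by blast
  have ainv: "\<forall>t. (\<Sum>s\<in>UNIV. \<bar>x s\<bar> * q s t) = \<bar>x t\<bar>" by (rule abs_invariant[OF tm x(2)])
  obtain s1 where s1: "x s1 \<noteq> 0" using x(1) by auto
  define S where "S = (\<Sum>s\<in>UNIV. \<bar>x s\<bar>)"
  have Sp: "0 < S" unfolding S_def using s1 by (intro sum_pos2[of UNIV s1]) auto
  define \<mu> where "\<mu> = (\<lambda>s. \<bar>x s\<bar> / S)"
  have st: "stationary q \<mu>"
    unfolding stationary_def
  proof (intro conjI allI)
    fix s show "0 \<le> \<mu> s" using Sp by (simp add: \<mu>_def)
  next
    show "(\<Sum>s\<in>UNIV. \<mu> s) = 1" using Sp by (simp add: \<mu>_def sum_divide_distrib[symmetric] S_def)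
  next
    fix t show "(\<Sum>s\<in>UNIV. \<mu> s * q s t) = \<mu> t"
      using ainv by (simp add: \<mu>_def sum_divide_distrib[symmetric])
  qed
  have eq: "stat_dist q = \<mu>"
    unfolding stat_dist_def
  proof (rule the_equality[of "stationary q" \<mu>])
    show "stationary q \<mu>" by (rule st)
    fix m assume "stationary q m"
    then show "m = \<mu>" by (rule stationary_unique[OF tm irr _ st])
  qed
  show "stationary q (stat_dist q)" using st eq by simp
  fix s
  have "\<And>s. 0 \<le> \<mu> s" using st by (simp add: stationary_def)
  moreover have "\<forall>t. (\<Sum>s\<in>UNIV. \<mu> s * q s t) = \<mu> t" using st by (simp add: stationary_def)
  moreover have "\<mu> s1 \<noteq> 0" using s1 Sp by (simp add: \<mu>_def)
  ultimately have "0 < \<mu> s" by (rule pos_invariant[OF tm irr])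
  then show "0 < stat_dist q s" using eq by simp
qed

lemma fe_nonneg:
  assumes tm: "transition_matrix q"
  shows "0 \<le> first_entrance q C n s t"
  using tm
  by (induction q C n s t rule: first_entrance.induct)
     (auto simp: transition_matrix_def intro!: sum_nonneg mult_nonneg_nonneg)

lemma fe_notC: "t \<notin> C \<Longrightarrow> first_entrance q C n s t = 0"
  by (induction q C n s t rule: first_entrance.induct) auto

lemma fe_partial_rec:
  "(\<Sum>n<Suc (Suc m). first_entrance q C n s t) =
     (if t \<in> C then q s t else 0) + (\<Sum>u\<in>-C. q s u * (\<Sum>n<Suc m. first_entrance q C n u t))"
proof (induction m)
  case 0
  then show ?case by simp
next
  case (Suc m)
  have "(\<Sum>n<Suc (Suc (Suc m)). first_entrance q C n s t) =
        (\<Sum>n<Suc (Suc m). first_entrance q C n s t) + first_entrance q C (Suc (Suc m)) s t"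
    by simp
  also have "\<dots> = (if t \<in> C then q s t else 0) +
      (\<Sum>u\<in>-C. q s u * (\<Sum>n<Suc m. first_entrance q C n u t) + q s u * first_entrance q C (Suc m) u t)"
    by (simp only: Suc sum.distrib first_entrance.simps)
  also have "\<dots> = (if t \<in> C then q s t else 0) + (\<Sum>u\<in>-C. q s u * (\<Sum>n<Suc (Suc m). first_entrance q C n u t))"
    by (simp add: distrib_left)
  finally show ?case .
qed

lemma fe_partial_bound:
  fixes q :: "'s::finite \<Rightarrow> 's \<Rightarrow> real"
  assumes tm: "transition_matrix q"
  shows "(\<Sum>n<m. \<Sum>t\<in>C. first_entrance q C n s t) \<le> 1"
proof -
  have qn: "\<And>s t. 0 \<le> q s t" and rs: "\<And>s. (\<Sum>t\<in>UNIV. q s t) = 1"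
    using tm by (auto simp: transition_matrix_def)
  have "\<forall>s. (\<Sum>n<Suc k. \<Sum>t\<in>C. first_entrance q C n s t) \<le> 1" for k
  proof (induction k)
    case 0
    then show ?case by simp
  next
    case (Suc k)
    show ?case
    proof
      fix s
      have "(\<Sum>n<Suc (Suc k). \<Sum>t\<in>C. first_entrance q C n s t) =
            (\<Sum>t\<in>C. \<Sum>n<Suc (Suc k). first_entrance q C n s t)"
        by (rule sum.swap)
      also have "\<dots> = (\<Sum>t\<in>C. q s t + (\<Sum>u\<in>-C. q s u * (\<Sum>n<Suc k. first_entrance q C n u t)))"
        by (intro sum.cong refl) (simp only: fe_partial_rec if_True)
      also have "\<dots> = (\<Sum>t\<in>C. q s t) + (\<Sum>u\<in>-C. q s u * (\<Sum>t\<in>C. \<Sum>n<Suc k. first_entrance q C n u t))"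
        by (subst sum.distrib, subst sum.swap) (simp add: sum_distrib_left del: sum.lessThan_Suc)
      also have "\<dots> \<le> (\<Sum>t\<in>C. q s t) + (\<Sum>u\<in>-C. q s u * 1)"
      proof -
        have "(\<Sum>t\<in>C. \<Sum>n<Suc k. first_entrance q C n u t) \<le> 1" for u
          using Suc.IH by (metis sum.swap)
        then show ?thesis
          by (intro add_left_mono sum_mono mult_left_mono) (auto simp: qn)
      qed
      also have "\<dots> = 1" using rs[of s] sum_UNIV_split[of "q s" C] by simp
      finally show "(\<Sum>n<Suc (Suc k). \<Sum>t\<in>C. first_entrance q C n s t) \<le> 1" .
    qed
  qed
  then show ?thesis by (cases m) auto
qed

lemma fe_partial_bound1:
  fixes q :: "'s::finite \<Rightarrow> 's \<Rightarrow> real"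
  assumes tm: "transition_matrix q"
  shows "(\<Sum>n<m. first_entrance q C n s t) \<le> 1"
proof (cases "t \<in> C")
  case True
  have "(\<Sum>n<m. first_entrance q C n s t) \<le> (\<Sum>n<m. \<Sum>t\<in>C. first_entrance q C n s t)"
    by (intro sum_mono member_le_sum) (auto simp: True fe_nonneg[OF tm])
  also have "\<dots> \<le> 1" by (rule fe_partial_bound[OF tm])
  finally show ?thesis .
next
  case False
  then show ?thesis by (simp add: fe_notC)
qed

lemma fe_summable:
  fixes q :: "'s::finite \<Rightarrow> 's \<Rightarrow> real"
  assumes tm: "transition_matrix q"
  shows "summable (\<lambda>n. first_entrance q C n s t)"
  by (rule summableI_nonneg_bounded[where x=1]) (auto simp: fe_nonneg[OF tm] fe_partial_bound1[OF tm])

lemma hit_nonneg: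
  fixes q :: "'s::finite \<Rightarrow> 's \<Rightarrow> real"
  assumes tm: "transition_matrix q"
  shows "0 \<le> hit_at q C s t"
  unfolding hit_at_def by (rule suminf_nonneg[OF fe_summable[OF tm]]) (simp add: fe_nonneg[OF tm])

lemma hit_sum_le1:
  fixes q :: "'s::finite \<Rightarrow> 's \<Rightarrow> real"
  assumes tm: "transition_matrix q"
  shows "(\<Sum>t\<in>C. hit_at q C s t) \<le> 1"
proof -
  have "(\<Sum>t\<in>C. hit_at q C s t) = (\<Sum>n. \<Sum>t\<in>C. first_entrance q C n s t)"
    unfolding hit_at_def by (rule suminf_sum[symmetric]) (simp add: fe_summable[OF tm])
  also have "\<dots> \<le> 1"
    by (rule suminf_le_const) (auto intro!: summable_sum fe_summable[OF tm] fe_partial_bound[OF tm])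
  finally show ?thesis .
qed

lemma hit_rec:
  fixes q :: "'s::finite \<Rightarrow> 's \<Rightarrow> real"
  assumes tm: "transition_matrix q"
  shows "hit_at q C s t = (if t \<in> C then q s t else 0) + (\<Sum>u\<in>-C. q s u * hit_at q C u t)"
proof -
  have l1: "(\<lambda>m. \<Sum>n<Suc (Suc m). first_entrance q C n s t) \<longlonglongrightarrow> hit_at q C s t"
    unfolding hit_at_def
    using summable_LIMSEQ[OF fe_summable[OF tm]] by (rule LIMSEQ_Suc[OF LIMSEQ_Suc])
  have l2: "(\<lambda>m. (if t \<in> C then q s t else 0) + (\<Sum>u\<in>-C. q s u * (\<Sum>n<Suc m. first_entrance q C n u t)))
      \<longlonglongrightarrow> (if t \<in> C then q s t else 0) + (\<Sum>u\<in>-C. q s u * hit_at q C u t)"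
    unfolding hit_at_def
    by (intro tendsto_intros LIMSEQ_Suc summable_LIMSEQ fe_summable[OF tm])
  show ?thesis
    using l1 l2 by (simp only: fe_partial_rec) (rule LIMSEQ_unique)
qed

lemma hit_pos_path:
  fixes q qh :: "'s::finite \<Rightarrow> 's \<Rightarrow> real"
  assumes tm: "transition_matrix q"
    and eq: "\<forall>x\<in>-C. \<forall>y. qh x y = q x y"
  shows "0 < first_entrance q C (Suc n) v t \<Longrightarrow> v \<in> -C \<Longrightarrow> (v, t) \<in> {(x, y). 0 < qh x y}\<^sup>*"
proof (induction n arbitrary: v)
  case 0
  then have "0 < qh v t" using eq by (auto split: if_splits)
  then show ?case by auto
next
  case (Suc n)
  have "0 < (\<Sum>u\<in>-C. q v u * first_entrance q C (Suc n) u t)" using Suc.prems by simp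
  then obtain u where u: "u \<in> -C" "0 < q v u * first_entrance q C (Suc n) u t"
    by (metis (no_types, lifting) less_irrefl sum_nonpos not_le)
  have qn: "0 \<le> q v u" using tm by (simp add: transition_matrix_def)
  have f: "0 \<le> first_entrance q C (Suc n) u t" by (rule fe_nonneg[OF tm])
  have "0 < q v u" "0 < first_entrance q C (Suc n) u t"
    using u(2) qn f by (auto simp: zero_less_mult_iff)
  then have "0 < qh v u" "(u, t) \<in> {(x, y). 0 < qh x y}\<^sup>*"
    using Suc.IH[OF _ u(1)] eq Suc.prems(2) by auto
  then show ?case by (meson converse_rtrancl_into_rtrancl case_prodI mem_Collect_eq)
qed

lemma hit_pos_path2:
  fixes q qh :: "'s::finite \<Rightarrow> 's \<Rightarrow> real"
  assumes tm: "transition_matrix q"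
    and eq: "\<forall>x\<in>-C. \<forall>y. qh x y = q x y"
    and pos: "0 < hit_at q C v t" and v: "v \<in> -C"
  shows "(v, t) \<in> {(x, y). 0 < qh x y}\<^sup>*"
proof -
  have "\<exists>n. first_entrance q C n v t \<noteq> 0"
  proof (rule ccontr)
    assume "\<not> ?thesis"
    then have "hit_at q C v t = 0" by (simp add: hit_at_def)
    then show False using pos by simp
  qed
  then obtain n where "first_entrance q C n v t \<noteq> 0" by blast
  moreover have "0 \<le> first_entrance q C n v t" by (rule fe_nonneg[OF tm])
  ultimately have p: "0 < first_entrance q C n v t" by simp
  then obtain m where "n = Suc m" by (cases n) auto
  then show ?thesis using hit_pos_path[OF tm eq _ v] p by simp
qed

definition Gfun :: "('s::finite \<Rightarrow> 's \<Rightarrow> real) \<Rightarrow> 's set \<Rightarrow> 's set \<Rightarrow> 's \<Rightarrow> real" where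
  "Gfun q S1 A v = (if v \<in> A then 1 else if v \<in> S1 then 0 else 1 - (\<Sum>t\<in>S1-A. hit_at q S1 v t))"

lemma sum_split_sub:
  fixes f :: "'s \<Rightarrow> real"
  assumes "finite B" "A \<subseteq> B"
  shows "(\<Sum>x\<in>B. f x) = (\<Sum>x\<in>A. f x) + (\<Sum>x\<in>B-A. f x)"
  using sum.subset_diff[OF assms(2) assms(1), of f] by simp

lemma G_bounds:
  fixes q :: "'s::finite \<Rightarrow> 's \<Rightarrow> real"
  assumes tm: "transition_matrix q" and A: "A \<subseteq> S1"
  shows "0 \<le> Gfun q S1 A v" "Gfun q S1 A v \<le> 1"
proof -
  have "(\<Sum>t\<in>S1-A. hit_at q S1 v t) \<le> (\<Sum>t\<in>S1. hit_at q S1 v t)"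
    by (rule sum_mono2) (auto simp: hit_nonneg[OF tm])
  also have "\<dots> \<le> 1" by (rule hit_sum_le1[OF tm])
  finally have 1: "(\<Sum>t\<in>S1-A. hit_at q S1 v t) \<le> 1" .
  have 2: "0 \<le> (\<Sum>t\<in>S1-A. hit_at q S1 v t)" by (rule sum_nonneg) (simp add: hit_nonneg[OF tm])
  show "0 \<le> Gfun q S1 A v" "Gfun q S1 A v \<le> 1" using 1 2 by (auto simp: Gfun_def)
qed

lemma G_harm:
  fixes q :: "'s::finite \<Rightarrow> 's \<Rightarrow> real"
  assumes tm: "transition_matrix q" and A: "A \<subseteq> S1" and v: "v \<notin> S1"
  shows "(\<Sum>w\<in>UNIV. q v w * Gfun q S1 A w) = Gfun q S1 A v"
proof -
  define G where "G = Gfun q S1 A"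
  define B where "B = S1 - A"
  have rs: "(\<Sum>t\<in>UNIV. q v t) = 1" using tm by (simp add: transition_matrix_def)
  have hB: "(\<Sum>t\<in>B. hit_at q S1 u t) = (\<Sum>t\<in>B. q u t) + (\<Sum>w\<in>-S1. q u w * (\<Sum>t\<in>B. hit_at q S1 w t))" for u
  proof -
    have "(\<Sum>t\<in>B. hit_at q S1 u t) = (\<Sum>t\<in>B. q u t + (\<Sum>w\<in>-S1. q u w * hit_at q S1 w t))"
      by (intro sum.cong refl) (subst hit_rec[OF tm], auto simp: B_def)
    also have "\<dots> = (\<Sum>t\<in>B. q u t) + (\<Sum>w\<in>-S1. q u w * (\<Sum>t\<in>B. hit_at q S1 w t))"
      by (subst sum.distrib, subst sum.swap) (simp add: sum_distrib_left)
    finally show ?thesis .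
  qed
  have "(\<Sum>w\<in>UNIV. q v w * G w) = (\<Sum>w\<in>S1. q v w * G w) + (\<Sum>w\<in>-S1. q v w * G w)"
    by (rule sum_UNIV_split)
  also have "(\<Sum>w\<in>S1. q v w * G w) = (\<Sum>w\<in>A. q v w * G w) + (\<Sum>w\<in>B. q v w * G w)"
    unfolding B_def by (rule sum_split_sub[OF finite A])
  also have "(\<Sum>w\<in>A. q v w * G w) = (\<Sum>w\<in>A. q v w)" by (simp add: G_def Gfun_def)
  also have "(\<Sum>w\<in>B. q v w * G w) = 0" by (simp add: G_def Gfun_def B_def)
  also have "(\<Sum>w\<in>-S1. q v w * G w) = (\<Sum>w\<in>-S1. q v w * (1 - (\<Sum>t\<in>B. hit_at q S1 w t)))"
    by (intro sum.cong refl) (insert A, auto simp: G_def Gfun_def B_def)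
  also have "\<dots> = (\<Sum>w\<in>-S1. q v w) - (\<Sum>w\<in>-S1. q v w * (\<Sum>t\<in>B. hit_at q S1 w t))"
    by (simp add: right_diff_distrib sum_subtractf)
  finally have "(\<Sum>w\<in>UNIV. q v w * G w) = (\<Sum>w\<in>A. q v w) + (\<Sum>w\<in>-S1. q v w)
       - (\<Sum>w\<in>-S1. q v w * (\<Sum>t\<in>B. hit_at q S1 w t))" by simp
  moreover have "1 = (\<Sum>w\<in>A. q v w) + (\<Sum>w\<in>B. q v w) + (\<Sum>w\<in>-S1. q v w)"
    using rs sum_UNIV_split[of "q v" S1] sum_split_sub[OF finite A, of "q v"] by (simp add: B_def)
  moreover have "G v = 1 - (\<Sum>t\<in>B. hit_at q S1 v t)" using v A by (auto simp: G_def Gfun_def B_def)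
  ultimately show ?thesis using hB[of v] by (simp add: G_def)
qed

lemma stat_identity:
  fixes p :: "'s::finite \<Rightarrow> 's \<Rightarrow> real"
  assumes A: "A \<subseteq> S1"
    and G1: "\<forall>u\<in>A. G u = 1" and G0: "\<forall>u\<in>S1-A. G u = 0"
    and harm: "\<forall>u\<in>-S1. (\<Sum>w\<in>UNIV. p u w * G w) = G u"
    and inv: "\<forall>t. (\<Sum>s\<in>UNIV. \<nu> s * p s t) = \<nu> t"
  shows "(\<Sum>u\<in>A. \<nu> u * (1 - (\<Sum>w\<in>UNIV. p u w * G w))) = (\<Sum>u\<in>S1-A. \<nu> u * (\<Sum>w\<in>UNIV. p u w * G w))"
proof -
  define H where "H u = (\<Sum>w\<in>UNIV. p u w * G w)" for u
  have "(\<Sum>v\<in>UNIV. \<nu> v * G v) = (\<Sum>v\<in>UNIV. (\<Sum>u\<in>UNIV. \<nu> u * p u v) * G v)"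
    using inv by simp
  also have "\<dots> = (\<Sum>u\<in>UNIV. \<nu> u * H u)"
    unfolding H_def by (simp add: sum_distrib_left sum_distrib_right mult.assoc) (rule sum.swap)
  finally have e: "(\<Sum>v\<in>UNIV. \<nu> v * G v) = (\<Sum>u\<in>UNIV. \<nu> u * H u)" .
  have e2: "(\<Sum>u\<in>-S1. \<nu> u * G u) = (\<Sum>u\<in>-S1. \<nu> u * H u)"
    using harm by (simp add: H_def)
  have "(\<Sum>v\<in>S1. \<nu> v * G v) = (\<Sum>u\<in>S1. \<nu> u * H u)"
    using e e2 sum_UNIV_split[of "\<lambda>v. \<nu> v * G v" S1] sum_UNIV_split[of "\<lambda>v. \<nu> v * H v" S1] by simp
  moreover have "(\<Sum>v\<in>S1. \<nu> v * G v) = (\<Sum>v\<in>A. \<nu> v)"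
    using sum_split_sub[OF finite A, of "\<lambda>v. \<nu> v * G v"] G1 G0 by simp
  moreover have "(\<Sum>u\<in>S1. \<nu> u * H u) = (\<Sum>u\<in>A. \<nu> u * H u) + (\<Sum>u\<in>S1-A. \<nu> u * H u)"
    by (rule sum_split_sub[OF finite A])
  ultimately show ?thesis
    by (simp add: H_def[symmetric] right_diff_distrib sum_subtractf)
qed

lemma pfh_rec:
  fixes q :: "'s::finite \<Rightarrow> 's \<Rightarrow> real"
  assumes tm: "transition_matrix q" and t: "t \<in> C"
  shows "prob_first_hit_eq q C t s = q s t + (\<Sum>u\<in>-C. q s u * prob_first_hit_eq q C t u)"
proof -
  have rs: "(\<Sum>x\<in>UNIV. q s x) = 1" using tm by (simp add: transition_matrix_def)
  have tot: "(\<Sum>x\<in>C. hit_at q C s x) = (\<Sum>x\<in>C. q s x) + (\<Sum>u\<in>-C. q s u * (\<Sum>x\<in>C. hit_at q C u x))"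
  proof -
    have "(\<Sum>x\<in>C. hit_at q C s x) = (\<Sum>x\<in>C. q s x + (\<Sum>u\<in>-C. q s u * hit_at q C u x))"
      by (intro sum.cong refl) (subst hit_rec[OF tm], auto)
    also have "\<dots> = (\<Sum>x\<in>C. q s x) + (\<Sum>u\<in>-C. q s u * (\<Sum>x\<in>C. hit_at q C u x))"
      by (subst sum.distrib, subst sum.swap) (simp add: sum_distrib_left)
    finally show ?thesis .
  qed
  have one: "1 = (\<Sum>x\<in>C. q s x) + (\<Sum>u\<in>-C. q s u)" using rs sum_UNIV_split[of "q s" C] by simp
  have "prob_first_hit_eq q C t s = hit_at q C s t + 1 - (\<Sum>x\<in>C. hit_at q C s x)"
    by (simp add: prob_first_hit_eq_def)
  also have "\<dots> = q s t + (\<Sum>u\<in>-C. q s u * hit_at q C u t) + (\<Sum>u\<in>-C. q s u)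
       - (\<Sum>u\<in>-C. q s u * (\<Sum>x\<in>C. hit_at q C u x))"
    by (subst hit_rec[OF tm], subst one, subst tot) (simp add: t)
  also have "\<dots> = q s t + (\<Sum>u\<in>-C. q s u * prob_first_hit_eq q C t u)"
    by (simp add: prob_first_hit_eq_def distrib_left right_diff_distrib sum.distrib sum_subtractf)
  finally show ?thesis .
qed

lemma pfh_le1:
  fixes q :: "'s::finite \<Rightarrow> 's \<Rightarrow> real"
  assumes tm: "transition_matrix q" and t: "t \<in> C"
  shows "prob_first_hit_eq q C t s \<le> 1"
proof -
  have "hit_at q C s t \<le> (\<Sum>x\<in>C. hit_at q C s x)"
    by (rule member_le_sum) (auto simp: t hit_nonneg[OF tm])
  then show ?thesis by (simp add: prob_first_hit_eq_def)
qed

lemma Phi_lower: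
  fixes q :: "'s::finite \<Rightarrow> 's \<Rightarrow> real"
  assumes tm: "transition_matrix q" and st: "stationary q \<mu>"
    and A: "A \<subseteq> S1" and t: "t \<in> S1 - A"
    and ha: "\<forall>s\<in>A. a \<le> prob_first_hit_eq q (-S1 \<union> {t}) t s"
  shows "a * (\<Sum>u\<in>A. \<mu> u * (\<Sum>v\<in>-A. q u v)) \<le> (\<Sum>u\<in>A. \<mu> u * (\<Sum>v\<in>S1-A. q u v))"
proof -
  define C where "C = -S1 \<union> {t}"
  define h where "h = prob_first_hit_eq q C t"
  have qn: "\<And>s t. 0 \<le> q s t" and rs: "\<And>s. (\<Sum>t\<in>UNIV. q s t) = 1"
    using tm by (auto simp: transition_matrix_def)
  have mn: "\<And>s. 0 \<le> \<mu> s" and inv: "\<And>t. (\<Sum>s\<in>UNIV. \<mu> s * q s t) = \<mu> t"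
    using st by (auto simp: stationary_def)
  have tC: "t \<in> C" by (simp add: C_def)
  have h1: "\<And>s. h s \<le> 1" unfolding h_def by (rule pfh_le1[OF tm tC])
  have cC: "-C = A \<union> (S1 - A - {t})" using A t by (auto simp: C_def)
  have sub: "h s - (\<Sum>u\<in>A. q s u * h u) \<le> (\<Sum>v\<in>S1-A. q s v)" for s
  proof -
    have "h s = q s t + (\<Sum>u\<in>-C. q s u * h u)" unfolding h_def by (rule pfh_rec[OF tm tC])
    also have "(\<Sum>u\<in>-C. q s u * h u) = (\<Sum>u\<in>A. q s u * h u) + (\<Sum>u\<in>S1-A-{t}. q s u * h u)"
      unfolding cC by (rule sum.union_disjoint) auto
    also have "(\<Sum>u\<in>S1-A-{t}. q s u * h u) \<le> (\<Sum>u\<in>S1-A-{t}. q s u)"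
      by (rule sum_mono) (simp add: h1 qn mult_left_le)
    also have "q s t + (\<Sum>u\<in>S1-A-{t}. q s u) = (\<Sum>v\<in>S1-A. q s v)"
      using sum.remove[of "S1-A" t "q s"] t by simp
    ultimately show ?thesis by linarith
  qed
  have io: "0 \<le> \<mu> w - (\<Sum>u\<in>A. \<mu> u * q u w)" for w
  proof -
    have "(\<Sum>u\<in>A. \<mu> u * q u w) \<le> (\<Sum>u\<in>UNIV. \<mu> u * q u w)"
      by (rule sum_mono2) (auto simp: mn qn)
    then show ?thesis using inv[of w] by simp
  qed
  have e1: "(\<Sum>w\<in>A. a * (\<mu> w - (\<Sum>u\<in>A. \<mu> u * q u w))) = a * (\<Sum>u\<in>A. \<mu> u * (\<Sum>v\<in>-A. q u v))"
  proof -
    have "(\<Sum>w\<in>A. \<Sum>u\<in>A. \<mu> u * q u w) = (\<Sum>u\<in>A. \<mu> u * (\<Sum>w\<in>A. q u w))"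
      by (simp add: sum_distrib_left) (rule sum.swap)
    moreover have "(\<Sum>v\<in>-A. q u v) = 1 - (\<Sum>w\<in>A. q u w)" for u
      using rs[of u] sum_UNIV_split[of "q u" A] by simp
    ultimately show ?thesis
      by (simp add: sum_distrib_left[symmetric] sum_subtractf right_diff_distrib)
  qed
  have e2: "(\<Sum>u\<in>A. \<mu> u * (h u - (\<Sum>w\<in>A. q u w * h w))) =
      (\<Sum>w\<in>A. h w * (\<mu> w - (\<Sum>u\<in>A. \<mu> u * q u w)))"
  proof -
    have "(\<Sum>u\<in>A. \<mu> u * (\<Sum>w\<in>A. q u w * h w)) = (\<Sum>w\<in>A. h w * (\<Sum>u\<in>A. \<mu> u * q u w))"
      by (simp add: sum_distrib_left mult_ac) (rule sum.swap)
    then show ?thesis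
      by (simp add: right_diff_distrib sum_subtractf mult_ac)
  qed
  have "a * (\<Sum>u\<in>A. \<mu> u * (\<Sum>v\<in>-A. q u v)) = (\<Sum>w\<in>A. a * (\<mu> w - (\<Sum>u\<in>A. \<mu> u * q u w)))"
    using e1 by simp
  also have "\<dots> \<le> (\<Sum>w\<in>A. h w * (\<mu> w - (\<Sum>u\<in>A. \<mu> u * q u w)))"
    using ha A by (intro sum_mono mult_right_mono io) (auto simp: h_def C_def)
  also have "\<dots> = (\<Sum>u\<in>A. \<mu> u * (h u - (\<Sum>w\<in>A. q u w * h w)))" using e2 by simp
  also have "\<dots> \<le> (\<Sum>u\<in>A. \<mu> u * (\<Sum>v\<in>S1-A. q u v))"
    by (rule sum_mono) (simp add: mult_left_mono mn sub)
  finally show ?thesis by simp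
qed

lemma key_ineq:
  fixes \<beta> \<Phi> Z x a :: real
  assumes b0: "0 < \<beta>" and b1: "\<beta> < 1/4" and Z: "0 < Z" and P: "a * Z \<le> \<Phi>" and a: "0 < a"
    and x: "x < a * \<beta> / 16" and x0: "0 \<le> x"
  shows "(1+\<beta>) * \<Phi> + x * Z < (1+3*\<beta>) * ((1-\<beta>) * \<Phi> - x * Z)"
proof -
  have "\<beta> * \<beta> \<le> \<beta> * (1/4)" using b0 b1 by (intro mult_left_mono) auto
  then have c: "\<beta> / 4 \<le> \<beta> - 3*\<beta>^2" by (simp add: power2_eq_square algebra_simps)
  have "a * Z * (\<beta> / 4) \<le> \<Phi> * (\<beta> - 3*\<beta>^2)"
  proof -
    have "a * Z * (\<beta> / 4) \<le> a * Z * (\<beta> - 3*\<beta>^2)" using c a Z by (intro mult_left_mono) auto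
    also have "\<dots> \<le> \<Phi> * (\<beta> - 3*\<beta>^2)" using P c b0 by (intro mult_right_mono) auto
    finally show ?thesis .
  qed
  moreover have "x * Z * (2 + 3*\<beta>) < a * Z * (\<beta> / 4)"
  proof -
    have "x * Z * (2 + 3*\<beta>) \<le> x * Z * (11/4)" using b1 x0 Z by (intro mult_left_mono) auto
    also have "\<dots> < (a * \<beta> / 16) * Z * (11/4)" using x Z by (intro mult_strict_right_mono) auto
    also have "\<dots> \<le> a * Z * (\<beta> / 4)" using a b0 Z by (simp add: algebra_simps)
    finally show ?thesis .
  qed
  ultimately have "x * Z * (2 + 3*\<beta>) < \<Phi> * (\<beta> - 3*\<beta>^2)" by linarith
  then show ?thesis by (simp add: power2_eq_square algebra_simps)
qed

lemma eps_small:
  fixes \<beta> a \<epsilon> L :: real and N :: nat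
  assumes b0: "0 < \<beta>" and b1: "\<beta> < 1" and a0: "0 < a" and a1: "a \<le> 1" and L: "real N \<le> L"
    and N: "2 \<le> N" and e0: "0 < \<epsilon>"
    and e: "\<epsilon> < 1/2 * (a / L) ^ N * (\<beta> * (1 - \<beta>)) / (L * real N ^ 4)"
  shows "real N ^ 2 * \<epsilon> < a * \<beta> / 16"
proof -
  have L2: "2 \<le> L" using L N by linarith
  have LN: "0 < L * real N ^ 4" using L2 N by simp
  have "\<epsilon> * (L * real N ^ 4) < 1/2 * (a / L) ^ N * (\<beta> * (1 - \<beta>))"
    using e LN by (simp add: pos_less_divide_eq)
  also have "\<dots> \<le> 1/2 * a * \<beta>"
  proof -
    have "(a / L) ^ N \<le> (a / L) ^ 1"
      using a0 a1 L2 N by (intro power_decreasing) auto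
    also have "\<dots> \<le> a" using a0 L2 by (simp add: divide_le_eq)
    finally have 1: "(a / L) ^ N \<le> a" .
    have 2: "\<beta> * (1 - \<beta>) \<le> \<beta>" using b0 b1 by (simp add: algebra_simps)
    have "(a / L) ^ N * (\<beta> * (1 - \<beta>)) \<le> a * \<beta>"
      using 1 2 a0 b0 b1 L2 by (intro mult_mono) auto
    then show ?thesis by simp
  qed
  finally have 3: "\<epsilon> * (L * real N ^ 4) < 1/2 * a * \<beta>" .
  have "8 * (real N ^ 2 * \<epsilon>) \<le> (L * real N ^ 2) * (real N ^ 2 * \<epsilon>)"
  proof -
    have N2: "2 \<le> real N" using N by simp
    have "2 * 2 \<le> real N * real N" using N2 by (intro mult_mono) auto
    then have 4: "4 \<le> real N ^ 2" by (simp add: power2_eq_square)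
    have "2 * 4 \<le> L * real N ^ 2" using L2 4 by (intro mult_mono) auto
    then have "8 \<le> L * real N ^ 2" by simp
    then show ?thesis using e0 by (intro mult_right_mono) auto
  qed
  also have "\<dots> = \<epsilon> * (L * real N ^ 4)" by (simp add: power_numeral_reduce algebra_simps)
  finally show ?thesis using 3 by simp
qed

lemma bern_inv:
  fixes y :: real
  assumes "0 \<le> y"
  shows "(1 + y) ^ k * (1 - real k * y) \<le> 1"
proof (induction k)
  case 0
  then show ?case by simp
next
  case (Suc k)
  have "(1 + y) * (1 - real (Suc k) * y) \<le> 1 - real k * y"
    using assms by (simp add: algebra_simps)
  then have "(1 + y) ^ Suc k * (1 - real (Suc k) * y) \<le> (1 + y) ^ k * (1 - real k * y)"
    using assms by (simp add: mult.assoc mult_left_mono)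
  then show ?case using Suc by linarith
qed

lemma four_le_pow: "2 \<le> N \<Longrightarrow> 4 * (real N - 1) \<le> 2 ^ N"
proof (induction N rule: dec_induct)
  case base
  then show ?case by simp
next
  case (step n)
  then show ?case by simp
qed

lemma Lconst_ge: "2 \<le> N \<Longrightarrow> real N \<le> Lconst N"
proof -
  assume N: "2 \<le> N"
  have "real (N choose 1) * real 1 ^ N \<le> (\<Sum>n=1..N-1. real (N choose n) * real n ^ N)"
    using N by (intro member_le_sum) auto
  then show ?thesis by (simp add: Lconst_def)
qed

lemma final_num:
  fixes \<beta> L :: real and N n :: nat
  assumes b0: "0 < \<beta>" and b1: "\<beta> < 1 / 2 ^ N" and N: "2 \<le> N" and n: "n \<le> N" and L: "real N \<le> L"
  shows "(1 + 3*\<beta>) ^ (n - 1) - 1 \<le> 18 * \<beta> * L"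
proof -
  define k where "k = N - 1"
  have kN: "real k = real N - 1" using N by (simp add: k_def)
  have "\<beta> * 2 ^ N < 1" using b1 by (simp add: field_simps)
  then have "4 * (real N - 1) * \<beta> \<le> \<beta> * 2 ^ N"
    using four_le_pow[OF N] b0 by (simp add: mult.commute mult_left_mono)
  then have "4 * (real N - 1) * \<beta> < 1" using \<open>\<beta> * 2 ^ N < 1\<close> by linarith
  then have "4 * (real k * \<beta>) < 1" using kN by (simp only: mult.assoc)
  then have kb: "real k * \<beta> < 1/4" by linarith
  have "real k * (3*\<beta>) = 3*(real k * \<beta>)" by simp
  then have y: "real k * (3*\<beta>) \<le> 3/4" using kb by linarith
  have pos: "0 < 1 - real k * (3*\<beta>)" using y by linarith
  have "(1 + 3*\<beta>) ^ (n - 1) \<le> (1 + 3*\<beta>) ^ k"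
    using b0 n by (intro power_increasing) (auto simp: k_def)
  also have "\<dots> \<le> 1 / (1 - real k * (3*\<beta>))"
    using bern_inv[of "3*\<beta>" k] b0 pos by (simp add: le_divide_eq)
  also have "\<dots> \<le> 1 + 4 * (real k * (3*\<beta>))"
  proof -
    have "1 \<le> (1 + 4 * (real k * (3*\<beta>))) * (1 - real k * (3*\<beta>))"
    proof -
      define z where "z = real k * (3*\<beta>)"
      have z0: "0 \<le> z" using b0 by (simp add: z_def)
      have "0 \<le> z * (3 - 4 * z)" using z0 y by (intro mult_nonneg_nonneg) (auto simp: z_def)
      then show ?thesis unfolding z_def[symmetric] by (simp add: algebra_simps)
    qed
    then show ?thesis using pos by (simp add: divide_le_eq)
  qed
  also have "\<dots> \<le> 1 + 18 * \<beta> * L"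
  proof -
    have "real k \<le> L" using kN L by linarith
    then have "real k * \<beta> \<le> L * \<beta>" using b0 by (simp add: mult_right_mono)
    moreover have "4 * (real k * (3*\<beta>)) = 12 * (real k * \<beta>)" "18 * \<beta> * L = 18 * (L * \<beta>)" by simp_all
    moreover have "0 \<le> real k * \<beta>" using b0 by simp
    ultimately show ?thesis by linarith
  qed
  finally show ?thesis by simp
qed

lemma pert_entry:
  fixes q qh :: "'s::finite \<Rightarrow> 's \<Rightarrow> real"
  assumes close: "eps_beta_close \<epsilon> \<beta> qh q S1" and Zp: "0 < zeta1 q S1" and e0: "0 < \<epsilon>"
    and m0: "0 \<le> stat_dist q u" and qn: "0 \<le> q u v" and qhn: "0 \<le> qh u v"
    and f0: "0 \<le> f" and f1: "f \<le> 1" and b0: "0 < \<beta>" and b1: "\<beta> < 1"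
  shows "(1-\<beta>) * (stat_dist q u * q u v * f) - \<epsilon> * zeta1 q S1 \<le> stat_dist q u * qh u v * f"
    and "stat_dist q u * qh u v * f \<le> (1+\<beta>) * (stat_dist q u * q u v * f) + \<epsilon> * zeta1 q S1"
proof -
  define m where "m = stat_dist q u"
  define Z where "Z = zeta1 q S1"
  have eZ: "0 < \<epsilon> * Z" using e0 Zp by (simp add: Z_def)
  have "(1-\<beta>) * (m * q u v * f) - \<epsilon> * Z \<le> m * qh u v * f \<and>
        m * qh u v * f \<le> (1+\<beta>) * (m * q u v * f) + \<epsilon> * Z"
  proof (cases "\<epsilon> * Z \<le> m * q u v \<or> \<epsilon> * Z \<le> m * qh u v")
    case True
    have cl: "0 < q u v \<and> \<bar>1 - qh u v / q u v\<bar> \<le> \<beta>"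
    proof (cases "\<epsilon> * Z \<le> m * q u v")
      case True
      then have "\<bar>1 - qh u v / q u v\<bar> \<le> \<beta>" using close by (simp add: eps_beta_close_def m_def Z_def)
      moreover have "q u v \<noteq> 0" using True eZ by auto
      ultimately show ?thesis using qn by simp
    next
      case False
      then have "\<epsilon> * Z \<le> m * qh u v" using \<open>\<epsilon> * Z \<le> m * q u v \<or> \<epsilon> * Z \<le> m * qh u v\<close> by simp
      then show ?thesis using close by (simp add: eps_beta_close_def m_def Z_def)
    qed
    then have "1 - \<beta> \<le> qh u v / q u v" "qh u v / q u v \<le> 1 + \<beta>" by (auto simp: abs_le_iff)
    then have lo: "(1 - \<beta>) * q u v \<le> qh u v" and hi: "qh u v \<le> (1 + \<beta>) * q u v"
      using cl by (simp_all add: le_divide_eq divide_le_eq)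
    have mf: "0 \<le> m * f" using m0 f0 by (simp add: m_def)
    have "(1-\<beta>) * (m * q u v * f) = ((1 - \<beta>) * q u v) * (m * f)" by simp
    also have "\<dots> \<le> qh u v * (m * f)" using lo mf by (rule mult_right_mono)
    finally have 1: "(1-\<beta>) * (m * q u v * f) \<le> m * qh u v * f" by (simp add: mult_ac)
    have "m * qh u v * f = qh u v * (m * f)" by simp
    also have "\<dots> \<le> ((1 + \<beta>) * q u v) * (m * f)" using hi mf by (rule mult_right_mono)
    finally have 2: "m * qh u v * f \<le> (1+\<beta>) * (m * q u v * f)" by (simp add: mult_ac)
    show ?thesis using 1 2 eZ by linarith
  next
    case False
    then have s1: "m * q u v < \<epsilon> * Z" and s2: "m * qh u v < \<epsilon> * Z" by auto
    have p1: "0 \<le> m * q u v" "0 \<le> m * qh u v" using m0 qn qhn by (simp_all add: m_def)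
    have "(1-\<beta>) * (m * q u v * f) \<le> m * q u v * f" using b0 p1 f0 by (simp add: algebra_simps mult_nonneg_nonneg)
    also have "\<dots> \<le> m * q u v" using p1 f1 by (simp add: mult_left_le)
    finally have 1: "(1-\<beta>) * (m * q u v * f) \<le> m * q u v" .
    have 2: "0 \<le> m * qh u v * f" using p1 f0 by simp
    have 3: "m * qh u v * f \<le> m * qh u v" using p1 f1 by (simp add: mult_left_le)
    have 4: "0 \<le> (1+\<beta>) * (m * q u v * f)" using p1 f0 b0 by simp
    show ?thesis using 1 2 3 4 s1 s2 by linarith
  qed
  then show "(1-\<beta>) * (stat_dist q u * q u v * f) - \<epsilon> * zeta1 q S1 \<le> stat_dist q u * qh u v * f"
    and "stat_dist q u * qh u v * f \<le> (1+\<beta>) * (stat_dist q u * q u v * f) + \<epsilon> * zeta1 q S1"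
    by (simp_all add: m_def Z_def)
qed

lemma pert_set:
  fixes q qh :: "'s::finite \<Rightarrow> 's \<Rightarrow> real" and f :: "'s \<Rightarrow> real"
  assumes close: "eps_beta_close \<epsilon> \<beta> qh q S1" and Zp: "0 < zeta1 q S1" and e0: "0 < \<epsilon>"
    and m0: "\<And>u. 0 \<le> stat_dist q u" and qn: "\<And>u v. 0 \<le> q u v" and qhn: "\<And>u v. 0 \<le> qh u v"
    and f0: "\<And>v. 0 \<le> f v" and f1: "\<And>v. f v \<le> 1" and b0: "0 < \<beta>" and b1: "\<beta> < 1"
  shows "(1-\<beta>) * (\<Sum>u\<in>U. stat_dist q u * (\<Sum>v\<in>UNIV. q u v * f v)) - real CARD('s)^2 * \<epsilon> * zeta1 q S1
           \<le> (\<Sum>u\<in>U. stat_dist q u * (\<Sum>v\<in>UNIV. qh u v * f v))"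
    and "(\<Sum>u\<in>U. stat_dist q u * (\<Sum>v\<in>UNIV. qh u v * f v))
           \<le> (1+\<beta>) * (\<Sum>u\<in>U. stat_dist q u * (\<Sum>v\<in>UNIV. q u v * f v)) + real CARD('s)^2 * \<epsilon> * zeta1 q S1"
proof -
  define c where "c = \<epsilon> * zeta1 q S1"
  define N where "N = real CARD('s)"
  have c0: "0 \<le> c" using e0 Zp by (simp add: c_def)
  have cU: "real (card U) \<le> N" unfolding N_def by (simp add: card_mono)
  have row1: "(1-\<beta>) * (stat_dist q u * (\<Sum>v\<in>UNIV. q u v * f v)) - N * c
      \<le> stat_dist q u * (\<Sum>v\<in>UNIV. qh u v * f v)" for u
  proof -
    have "(\<Sum>v\<in>UNIV. (1-\<beta>) * (stat_dist q u * q u v * f v) - c) \<le> (\<Sum>v\<in>UNIV. stat_dist q u * qh u v * f v)"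
      by (rule sum_mono) (unfold c_def, rule pert_entry(1)[OF close Zp e0 m0 qn qhn f0 f1 b0 b1])
    moreover have "(\<Sum>v\<in>UNIV. (1-\<beta>) * (stat_dist q u * q u v * f v) - c)
       = (1-\<beta>) * (stat_dist q u * (\<Sum>v\<in>UNIV. q u v * f v)) - N * c"
      by (simp only: sum_subtractf sum_distrib_left mult.assoc) (simp add: N_def)
    moreover have "(\<Sum>v\<in>UNIV. stat_dist q u * qh u v * f v) = stat_dist q u * (\<Sum>v\<in>UNIV. qh u v * f v)"
      by (simp only: sum_distrib_left mult.assoc)
    ultimately show ?thesis by simp
  qed
  have row2: "stat_dist q u * (\<Sum>v\<in>UNIV. qh u v * f v)
      \<le> (1+\<beta>) * (stat_dist q u * (\<Sum>v\<in>UNIV. q u v * f v)) + N * c" for u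
  proof -
    have "(\<Sum>v\<in>UNIV. stat_dist q u * qh u v * f v) \<le> (\<Sum>v\<in>UNIV. (1+\<beta>) * (stat_dist q u * q u v * f v) + c)"
      by (rule sum_mono) (unfold c_def, rule pert_entry(2)[OF close Zp e0 m0 qn qhn f0 f1 b0 b1])
    moreover have "(\<Sum>v\<in>UNIV. (1+\<beta>) * (stat_dist q u * q u v * f v) + c)
       = (1+\<beta>) * (stat_dist q u * (\<Sum>v\<in>UNIV. q u v * f v)) + N * c"
      by (simp only: sum.distrib sum_distrib_left mult.assoc) (simp add: N_def)
    moreover have "(\<Sum>v\<in>UNIV. stat_dist q u * qh u v * f v) = stat_dist q u * (\<Sum>v\<in>UNIV. qh u v * f v)"
      by (simp only: sum_distrib_left mult.assoc)
    ultimately show ?thesis by simp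
  qed
  have Nc: "real (card U) * (N * c) \<le> N^2 * c"
  proof -
    have "real (card U) * (N * c) \<le> N * (N * c)" using cU c0 by (intro mult_right_mono) (auto simp: N_def)
    then show ?thesis by (simp add: power2_eq_square mult.assoc)
  qed
  have "(\<Sum>u\<in>U. (1-\<beta>) * (stat_dist q u * (\<Sum>v\<in>UNIV. q u v * f v)) - N * c)
          \<le> (\<Sum>u\<in>U. stat_dist q u * (\<Sum>v\<in>UNIV. qh u v * f v))"
    by (rule sum_mono) (rule row1)
  then show "(1-\<beta>) * (\<Sum>u\<in>U. stat_dist q u * (\<Sum>v\<in>UNIV. q u v * f v)) - real CARD('s)^2 * \<epsilon> * zeta1 q S1
           \<le> (\<Sum>u\<in>U. stat_dist q u * (\<Sum>v\<in>UNIV. qh u v * f v))"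
  proof -
    have "(\<Sum>u\<in>U. (1-\<beta>) * (stat_dist q u * (\<Sum>v\<in>UNIV. q u v * f v)) - N * c)
        = (1-\<beta>) * (\<Sum>u\<in>U. stat_dist q u * (\<Sum>v\<in>UNIV. q u v * f v)) - real (card U) * (N * c)"
      by (simp only: sum_subtractf sum_distrib_left sum_constant)
    then show ?thesis using Nc \<open>(\<Sum>u\<in>U. (1-\<beta>) * (stat_dist q u * (\<Sum>v\<in>UNIV. q u v * f v)) - N * c)
          \<le> (\<Sum>u\<in>U. stat_dist q u * (\<Sum>v\<in>UNIV. qh u v * f v))\<close>
      unfolding N_def c_def by (simp add: mult.assoc)
  qed
  have "(\<Sum>u\<in>U. stat_dist q u * (\<Sum>v\<in>UNIV. qh u v * f v))
        \<le> (\<Sum>u\<in>U. (1+\<beta>) * (stat_dist q u * (\<Sum>v\<in>UNIV. q u v * f v)) + N * c)"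
    by (rule sum_mono) (rule row2)
  then show "(\<Sum>u\<in>U. stat_dist q u * (\<Sum>v\<in>UNIV. qh u v * f v))
           \<le> (1+\<beta>) * (\<Sum>u\<in>U. stat_dist q u * (\<Sum>v\<in>UNIV. q u v * f v)) + real CARD('s)^2 * \<epsilon> * zeta1 q S1"
  proof -
    have "(\<Sum>u\<in>U. (1+\<beta>) * (stat_dist q u * (\<Sum>v\<in>UNIV. q u v * f v)) + N * c)
        = (1+\<beta>) * (\<Sum>u\<in>U. stat_dist q u * (\<Sum>v\<in>UNIV. q u v * f v)) + real (card U) * (N * c)"
      by (simp only: sum.distrib sum_distrib_left sum_constant)
    then show ?thesis using Nc \<open>(\<Sum>u\<in>U. stat_dist q u * (\<Sum>v\<in>UNIV. qh u v * f v))
        \<le> (\<Sum>u\<in>U. (1+\<beta>) * (stat_dist q u * (\<Sum>v\<in>UNIV. q u v * f v)) + N * c)\<close>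
      unfolding N_def c_def by (simp add: mult.assoc)
  qed
qed

lemma cross_edge:
  assumes "(c, d) \<in> r\<^sup>*" "c \<in> C" "d \<notin> C"
  shows "\<exists>x y. x \<in> C \<and> y \<notin> C \<and> (x, y) \<in> r"
  using assms
proof (induction rule: rtrancl_induct)
  case base
  then show ?case by simp
next
  case (step y z)
  show ?case
  proof (cases "y \<in> C")
    case True
    then show ?thesis using step.hyps(2) step.prems(2) by blast
  next
    case False
    then show ?thesis using step.IH step.prems(1) by blast
  qed
qed

lemma flow_pos:
  fixes q :: "'s::finite \<Rightarrow> 's \<Rightarrow> real"
  assumes tm: "transition_matrix q" and irr: "irreducible q" and mp: "\<And>s. 0 < \<mu> s"
    and C: "C \<noteq> {}" "C \<noteq> UNIV"
  shows "0 < (\<Sum>s\<in>C. \<mu> s * (\<Sum>t\<in>-C. q s t))"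
proof -
  have qn: "\<And>s t. 0 \<le> q s t" using tm by (simp add: transition_matrix_def)
  obtain c d where "c \<in> C" "d \<notin> C" using C by blast
  moreover have "(c, d) \<in> {(x, y). 0 < q x y}\<^sup>*" using irr by (simp add: irreducible_def)
  ultimately obtain x y where xy: "x \<in> C" "y \<notin> C" "(x, y) \<in> {(x, y). 0 < q x y}"
    using cross_edge[of c d "{(x, y). 0 < q x y}" C] by blast
  then have xy3: "0 < q x y" by simp
  have "0 < (\<Sum>t\<in>-C. q x t)" using xy xy3 by (intro sum_pos2[of "-C" y]) (auto simp: qn)
  then have "0 < \<mu> x * (\<Sum>t\<in>-C. q x t)" using mp by simp
  moreover have "\<And>s. 0 \<le> \<mu> s * (\<Sum>t\<in>-C. q s t)"
    using mp qn by (simp add: less_imp_le sum_nonneg)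
  ultimately show ?thesis using xy(1)
    by (intro sum_pos2[of C x]) auto
qed

theorem theorem2:
  fixes q qh :: "'st::finite \<Rightarrow> 'st \<Rightarrow> real"
    and S1 :: "'st set" and \<beta> a \<epsilon> :: real
  assumes "CARD('st) \<ge> 2"
    and "card S1 > 1"
    and "0 < \<beta>" and "\<beta> < 1 / 2 ^ CARD('st)"
    and "0 < a"
    and "0 < \<epsilon>"
    and "\<epsilon> < 1/2 * (a / Lconst CARD('st)) ^ CARD('st) * (\<beta> * (1 - \<beta>))
                 / (Lconst CARD('st) * real CARD('st) ^ 4)"
    and "transition_matrix q" and "irreducible q"
    and "\<forall>s\<in>S1. \<forall>t\<in>S1. prob_first_hit_eq q (-S1 \<union> {t}) t s \<ge> a"
    and "transition_matrix qh"
    and "eps_beta_close \<epsilon> \<beta> qh q S1"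
    and "\<forall>s\<in>-S1. \<forall>t. qh s t = q s t"
  shows "\<exists>R. recurrent_class qh R \<and> S1 \<subseteq> R \<and>
           (\<forall>\<mu>h. stationary qh \<mu>h \<and> (\<forall>s\<in>-R. \<mu>h s = 0) \<longrightarrow>
              (\<forall>s\<in>S1. \<bar>1 - (\<mu>h s / (\<Sum>u\<in>S1. \<mu>h u))
                         / (stat_dist q s / (\<Sum>u\<in>S1. stat_dist q u))\<bar>
                       \<le> 18 * \<beta> * Lconst CARD('st)))"
proof -
  note N2 = assms(1) and cS1 = assms(2) and b0 = assms(3) and bN = assms(4) and a0 = assms(5)
    and e0 = assms(6) and eb = assms(7) and tm = assms(8) and irr = assms(9) and ha = assms(10)
    and tmh = assms(11) and close = assms(12) and same = assms(13)
  define N where "N = CARD('st)"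
  define \<mu> where "\<mu> = stat_dist q"
  define Z where "Z = zeta1 q S1"
  define L where "L = Lconst CARD('st)"
  define \<rho> where "\<rho> = 1 + 3 * \<beta>"
  define G where "G = Gfun q S1"
  have st: "stationary q \<mu>" and mp: "\<And>s. 0 < \<mu> s"
    using stat_dist_props[OF tm irr] by (simp_all add: \<mu>_def)
  have m0: "\<And>s. 0 \<le> \<mu> s" using mp less_imp_le by blast
  have inv: "\<forall>t. (\<Sum>s\<in>UNIV. \<mu> s * q s t) = \<mu> t" using st by (simp add: stationary_def)
  have qn: "\<And>s t. 0 \<le> q s t" and rs: "\<And>s. (\<Sum>t\<in>UNIV. q s t) = 1"
    using tm by (auto simp: transition_matrix_def)
  have qhn: "\<And>s t. 0 \<le> qh s t" and rsh: "\<And>s. (\<Sum>t\<in>UNIV. qh s t) = 1"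
    using tmh by (auto simp: transition_matrix_def)
  have LN: "real N \<le> L" using Lconst_ge[OF N2] by (simp add: L_def N_def)
  have b4: "\<beta> < 1/4"
  proof -
    have "(2::real) ^ 2 \<le> 2 ^ CARD('st)" using N2 by (intro power_increasing) auto
    then have "1 / (2::real) ^ CARD('st) \<le> 1/4" by (simp add: divide_simps)
    then show ?thesis using bN by linarith
  qed
  have b1: "\<beta> < 1" using b4 by simp
  have fin: "finite S1" by simp
  obtain s0 where s0: "s0 \<in> S1" using cS1 by (metis card.empty ex_in_conv not_less_zero)
  have a1: "a \<le> 1"
  proof -
    have "a \<le> prob_first_hit_eq q (-S1 \<union> {s0}) s0 s0" using ha s0 by blast
    also have "\<dots> \<le> 1" by (rule pfh_le1[OF tm]) simp
    finally show ?thesis .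
  qed
  define flow where "flow C = (\<Sum>s\<in>C. stat_dist q s * (\<Sum>t\<in>-C. q s t))" for C
  define ZS where "ZS = {flow C | C. C \<noteq> {} \<and> C \<subset> S1}"
  have ZSeq: "ZS = flow ` {C. C \<noteq> {} \<and> C \<subset> S1}" by (auto simp: ZS_def)
  have finZS: "finite ZS" unfolding ZSeq by (rule finite_imageI) (rule finite_subset[of _ UNIV], auto)
  have Zdef: "Z = Min ZS" by (simp add: Z_def zeta1_def ZS_def flow_def)
  have s0S: "{s0} \<subset> S1"
  proof -
    have "S1 \<noteq> {s0}" using cS1 by auto
    then show ?thesis using s0 by auto
  qed
  have ZSne: "ZS \<noteq> {}" using s0S by (auto simp: ZS_def)
  have Zle: "Z \<le> (\<Sum>s\<in>A. \<mu> s * (\<Sum>t\<in>-A. q s t))" if "A \<noteq> {}" "A \<subset> S1" for A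
  proof -
    have "flow A \<in> ZS" using that by (auto simp: ZS_def)
    then show ?thesis unfolding Zdef using finZS by (simp add: flow_def \<mu>_def)
  qed
  have Zp: "0 < Z"
  proof -
    have "Z \<in> ZS" unfolding Zdef using finZS ZSne by (rule Min_in)
    then obtain C where C: "Z = flow C" "C \<noteq> {}" "C \<subset> S1" by (auto simp: ZS_def)
    have "C \<noteq> UNIV" using C(3) by auto
    then show ?thesis using flow_pos[OF tm irr mp C(2)] C(1) by (simp add: flow_def \<mu>_def)
  qed
  have Zp': "0 < zeta1 q S1" using Zp by (simp add: Z_def)
  have esmall: "real N ^ 2 * \<epsilon> < a * \<beta> / 16"
    by (rule eps_small[OF b0 b1 a0 a1 LN[unfolded L_def] N2[folded N_def] e0])
       (use eb in \<open>simp add: N_def\<close>)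
  have key: "(\<Sum>u\<in>S1-A. \<mu> u * (\<Sum>w\<in>UNIV. qh u w * G A w)) < \<rho> * (\<Sum>u\<in>A. \<mu> u * (1 - (\<Sum>w\<in>UNIV. qh u w * G A w)))
      \<and> 0 < (\<Sum>u\<in>A. \<mu> u * (1 - (\<Sum>w\<in>UNIV. qh u w * G A w)))"
    if A: "A \<noteq> {}" "A \<subset> S1" for A
  proof -
    have AS: "A \<subseteq> S1" using A by auto
    have G0: "\<And>v. 0 \<le> G A v" and G1: "\<And>v. G A v \<le> 1" unfolding G_def using G_bounds[OF tm AS] by auto
    have Gh: "\<forall>u\<in>-S1. (\<Sum>w\<in>UNIV. q u w * G A w) = G A u" unfolding G_def using G_harm[OF tm AS] by auto
    have GA: "\<forall>u\<in>A. G A u = 1" and GB: "\<forall>u\<in>S1-A. G A u = 0" by (auto simp: G_def Gfun_def)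
    define \<Phi> where "\<Phi> = (\<Sum>u\<in>A. \<mu> u * (1 - (\<Sum>w\<in>UNIV. q u w * G A w)))"
    have \<Phi>eq: "\<Phi> = (\<Sum>u\<in>S1-A. \<mu> u * (\<Sum>w\<in>UNIV. q u w * G A w))"
      unfolding \<Phi>_def by (rule stat_identity[OF AS GA GB Gh inv])
    have oneG: "1 - (\<Sum>w\<in>UNIV. p u w * G A w) = (\<Sum>w\<in>UNIV. p u w * (1 - G A w))"
      if "\<And>u. (\<Sum>t\<in>UNIV. p u t) = 1" for p :: "'st \<Rightarrow> 'st \<Rightarrow> real" and u
      using that[of u] by (simp add: right_diff_distrib sum_subtractf)
    have \<Phi>2: "\<Phi> = (\<Sum>u\<in>A. \<mu> u * (\<Sum>w\<in>UNIV. q u w * (1 - G A w)))"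
      unfolding \<Phi>_def using oneG[of q, OF rs] by simp
    obtain t where t: "t \<in> S1 - A" using A by auto
    have hat: "\<forall>s\<in>A. a \<le> prob_first_hit_eq q (-S1 \<union> {t}) t s" using ha AS t by auto
    have "a * Z \<le> a * (\<Sum>u\<in>A. \<mu> u * (\<Sum>v\<in>-A. q u v))"
      using Zle[OF A] a0 by simp
    also have "\<dots> \<le> (\<Sum>u\<in>A. \<mu> u * (\<Sum>v\<in>S1-A. q u v))"
      by (rule Phi_lower[OF tm st AS t hat])
    also have "\<dots> \<le> \<Phi>"
      unfolding \<Phi>2
    proof (rule sum_mono, rule mult_left_mono[OF _ m0])
      fix u
      have "(\<Sum>v\<in>S1-A. q u v) = (\<Sum>v\<in>S1-A. q u v * (1 - G A v))" using GB by simp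
      also have "\<dots> \<le> (\<Sum>v\<in>UNIV. q u v * (1 - G A v))"
        by (rule sum_mono2) (auto intro!: mult_nonneg_nonneg simp: qn G1)
      finally show "(\<Sum>v\<in>S1-A. q u v) \<le> (\<Sum>v\<in>UNIV. q u v * (1 - G A v))" .
    qed
    finally have \<Phi>a: "a * Z \<le> \<Phi>" .
    define Oh where "Oh = (\<Sum>u\<in>A. \<mu> u * (1 - (\<Sum>w\<in>UNIV. qh u w * G A w)))"
    define Ih where "Ih = (\<Sum>u\<in>S1-A. \<mu> u * (\<Sum>w\<in>UNIV. qh u w * G A w))"
    have Oh2: "Oh = (\<Sum>u\<in>A. \<mu> u * (\<Sum>w\<in>UNIV. qh u w * (1 - G A w)))"
      unfolding Oh_def using oneG[of qh, OF rsh] by simp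
    have Ohlo: "(1-\<beta>) * \<Phi> - real N ^ 2 * \<epsilon> * Z \<le> Oh"
      unfolding Oh2 \<Phi>2 N_def Z_def \<mu>_def
      by (rule pert_set(1)[OF close Zp' e0 m0[unfolded \<mu>_def] qn qhn _ _ b0 b1]) (auto simp: G0 G1)
    have Ihhi: "Ih \<le> (1+\<beta>) * \<Phi> + real N ^ 2 * \<epsilon> * Z"
      unfolding Ih_def \<Phi>eq N_def Z_def \<mu>_def
      by (rule pert_set(2)[OF close Zp' e0 m0[unfolded \<mu>_def] qn qhn _ _ b0 b1]) (auto simp: G0 G1)
    have x0: "0 \<le> real N ^ 2 * \<epsilon>" using e0 by simp
    have ki: "(1+\<beta>) * \<Phi> + (real N ^ 2 * \<epsilon>) * Z < (1+3*\<beta>) * ((1-\<beta>) * \<Phi> - (real N ^ 2 * \<epsilon>) * Z)"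
      by (rule key_ineq[OF b0 b4 Zp \<Phi>a a0 esmall x0])
    have pos1: "0 < (1+\<beta>) * \<Phi> + (real N ^ 2 * \<epsilon>) * Z"
    proof -
      have "0 < a * Z" using a0 Zp by simp
      then have "0 < \<Phi>" using \<Phi>a by linarith
      then show ?thesis using b0 x0 Zp by (simp add: add_pos_nonneg)
    qed
    have r0: "0 < \<rho>" using b0 by (simp add: \<rho>_def)
    have "0 < (1-\<beta>) * \<Phi> - real N ^ 2 * \<epsilon> * Z"
    proof (rule ccontr)
      assume "\<not> ?thesis"
      then have "(1+3*\<beta>) * ((1-\<beta>) * \<Phi> - (real N ^ 2 * \<epsilon>) * Z) \<le> 0"
        using b0 by (simp add: mult_nonneg_nonpos)
      then show False using ki pos1 by linarith
    qed
    then have Ohp: "0 < Oh" using Ohlo by linarith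
    have "\<rho> * ((1-\<beta>) * \<Phi> - real N ^ 2 * \<epsilon> * Z) \<le> \<rho> * Oh"
      using Ohlo r0 by (intro mult_left_mono) auto
    then have "Ih < \<rho> * Oh" using Ihhi ki unfolding \<rho>_def by (simp add: mult.assoc)
    then show ?thesis using Ohp by (simp add: Oh_def Ih_def)
  qed
  define E where "E = {(x, y). 0 < qh x y}"
  have Gharm_h: "\<forall>u\<in>-S1. (\<Sum>w\<in>UNIV. qh u w * G A w) = G A u" if AS: "A \<subseteq> S1" for A
    using G_harm[OF tm AS] same unfolding G_def by auto
  have conn: "(s, t) \<in> E\<^sup>*" if s: "s \<in> S1" and t: "t \<in> S1" for s t
  proof -
    define A where "A = {u\<in>S1. (s, u) \<in> E\<^sup>*}"
    have "A = S1"
    proof (rule ccontr)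
      assume ne: "A \<noteq> S1"
      have Ane: "A \<noteq> {}" using s by (auto simp: A_def)
      have AS: "A \<subset> S1" using ne by (auto simp: A_def)
      have "0 < (\<Sum>u\<in>A. \<mu> u * (1 - (\<Sum>w\<in>UNIV. qh u w * G A w)))" using key[OF Ane AS] by simp
      then obtain u where u: "u \<in> A" "0 < \<mu> u * (1 - (\<Sum>w\<in>UNIV. qh u w * G A w))"
        by (metis (no_types, lifting) less_irrefl not_le sum_nonpos)
      then have "0 < 1 - (\<Sum>w\<in>UNIV. qh u w * G A w)" using mp[of u] by (simp add: zero_less_mult_iff)
      then have "0 < (\<Sum>w\<in>UNIV. qh u w * (1 - G A w))"
        using rsh[of u] by (simp add: right_diff_distrib sum_subtractf)
      then obtain v where v: "0 < qh u v * (1 - G A v)"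
        by (metis (no_types, lifting) less_irrefl not_le sum_nonpos)
      have G1: "G A v \<le> 1" unfolding G_def using G_bounds[of q A S1 v] tm AS by auto
      have qv: "0 < qh u v" and gv: "G A v < 1"
        using v qhn[of u v] G1 by (auto simp: zero_less_mult_iff)
      have su: "(s, u) \<in> E\<^sup>*" using u(1) by (simp add: A_def)
      have sv: "(s, v) \<in> E\<^sup>*" using su qv by (simp add: E_def rtrancl.rtrancl_into_rtrancl)
      show False
      proof (cases "v \<in> S1")
        case True
        then have "v \<in> A" using sv by (simp add: A_def)
        then show False using gv by (simp add: G_def Gfun_def)
      next
        case False
        then have "v \<notin> A" using AS by auto
        then have "0 < (\<Sum>x\<in>S1-A. hit_at q S1 v x)" using gv False by (simp add: G_def Gfun_def)
        then obtain x where x: "x \<in> S1 - A" "0 < hit_at q S1 v x"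
          by (metis (no_types, lifting) less_irrefl not_le sum_nonpos)
        have "(v, x) \<in> E\<^sup>*"
          unfolding E_def by (rule hit_pos_path2[OF tm _ x(2)]) (use same False in auto)
        then have "(s, x) \<in> E\<^sup>*" using sv by simp
        then show False using x(1) by (simp add: A_def)
      qed
    qed
    then show ?thesis using t by (auto simp: A_def)
  qed
  have reach: "\<exists>z\<in>S1. (x, z) \<in> E\<^sup>*" for x
  proof -
    have "(x, s0) \<in> {(x, y). 0 < q x y}\<^sup>*" using irr by (simp add: irreducible_def)
    then show ?thesis
    proof (induction rule: converse_rtrancl_induct)
      case base
      then show ?case using s0 by blast
    next
      case (step y z)
      show ?case
      proof (cases "y \<in> S1")
        case True
        then show ?thesis by blast
      next
        case False
        then have "(y, z) \<in> E" using step.hyps(1) same by (simp add: E_def)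
        then show ?thesis using step.IH by (meson converse_rtrancl_into_rtrancl)
      qed
    qed
  qed
  define R where "R = {y. (s0, y) \<in> E\<^sup>*}"
  have toS0: "(x, s0) \<in> E\<^sup>*" for x
  proof -
    obtain z where "z \<in> S1" "(x, z) \<in> E\<^sup>*" using reach by blast
    then show ?thesis using conn[OF _ s0] by (meson rtrancl_trans)
  qed
  have rc: "recurrent_class qh R"
    unfolding recurrent_class_def
  proof (intro conjI ballI allI impI)
    show "R \<noteq> {}" by (auto simp: R_def)
  next
    fix x y assume "x \<in> R" "y \<in> R"
    then show "(x, y) \<in> {(u, v). 0 < qh u v}\<^sup>*"
      using toS0[of x] unfolding R_def E_def by (meson mem_Collect_eq rtrancl_trans)
  next
    fix x y assume "x \<in> R" "0 < qh x y"
    then show "y \<in> R" by (auto simp: R_def E_def intro: rtrancl_into_rtrancl)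
  qed
  have S1R: "S1 \<subseteq> R" using conn[OF s0] by (auto simp: R_def)
  show ?thesis
  proof (intro exI conjI allI impI ballI)
    show "recurrent_class qh R" by (rule rc)
    show "S1 \<subseteq> R" by (rule S1R)
  next
    fix \<mu>h s
    assume H: "stationary qh \<mu>h \<and> (\<forall>s\<in>-R. \<mu>h s = 0)" and s: "s \<in> S1"
    show "\<bar>1 - (\<mu>h s / (\<Sum>u\<in>S1. \<mu>h u)) / (stat_dist q s / (\<Sum>u\<in>S1. stat_dist q u))\<bar>
           \<le> 18 * \<beta> * Lconst CARD('st)"
    proof -
    have sth: "stationary qh \<mu>h" and zR: "\<forall>s\<in>-R. \<mu>h s = 0" using H by auto
    have mh0: "\<And>s. 0 \<le> \<mu>h s" and invh: "\<forall>t. (\<Sum>s\<in>UNIV. \<mu>h s * qh s t) = \<mu>h t"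
      and sum1: "(\<Sum>s\<in>UNIV. \<mu>h s) = 1" using sth by (auto simp: stationary_def)
    define r where "r u = \<mu>h u / \<mu> u" for u
    have mhr: "\<mu>h u = r u * \<mu> u" for u using mp[of u] by (simp add: r_def)
    have r0: "0 \<le> r u" for u using mh0[of u] mp[of u] by (simp add: r_def)
    have "\<exists>u\<in>S1. \<mu>h u \<noteq> 0"
    proof (rule ccontr)
      assume "\<not> ?thesis"
      then have z0: "\<mu>h s0 = 0" using s0 by auto
      have "\<mu>h x = 0" for x
      proof (cases "x \<in> R")
        case True
        have "(x, s0) \<in> {(x, y). 0 < qh x y}\<^sup>*" using toS0[of x] by (simp add: E_def)
        then show ?thesis using path_zero[OF qhn mh0 invh _ z0] by blast
      next
        case False
        then show ?thesis using zR by auto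
      qed
      then show False using sum1 by simp
    qed
    then obtain u0 where u0': "u0 \<in> S1" "\<mu>h u0 \<noteq> 0" by blast
    then have "0 < \<mu>h u0" using mh0[of u0] by linarith
    then have u0: "u0 \<in> S1" "0 < r u0" using u0'(1) mp[of u0] by (simp_all add: r_def)
    define M where "M = Max (r ` S1)"
    have rM: "r u \<le> M" if "u \<in> S1" for u using that by (simp add: M_def)
    have Min: "M \<in> r ` S1" unfolding M_def using u0 by (intro Max_in) auto
    have Mp: "0 < M" using rM[OF u0(1)] u0(2) by linarith
    have rho1: "1 \<le> \<rho>" using b0 by (simp add: \<rho>_def)
    have lstep: "\<exists>w\<in>S1-A. lv \<le> \<rho> * r w" if A: "A \<noteq> {}" "A \<subset> S1" and lam: "\<forall>u\<in>A. lv \<le> r u" for A lv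
    proof (rule ccontr)
      assume "\<not> ?thesis"
      then have lt: "\<forall>w\<in>S1-A. \<rho> * r w < lv" by (auto simp: not_le)
      have AS: "A \<subseteq> S1" using A by auto
      obtain w0 where w0: "w0 \<in> S1 - A" using A by auto
      have lp: "0 < lv" proof -
        have "0 \<le> \<rho> * r w0" using r0[of w0] rho1 by simp
        moreover have "\<rho> * r w0 < lv" using lt w0 by blast
        ultimately show ?thesis by linarith
      qed
      have G0: "\<And>v. 0 \<le> G A v" and G1: "\<And>v. G A v \<le> 1" unfolding G_def using G_bounds[OF tm AS] by auto
      have GA: "\<forall>u\<in>A. G A u = 1" and GB: "\<forall>u\<in>S1-A. G A u = 0" by (auto simp: G_def Gfun_def)
      define P where "P u = (\<Sum>w\<in>UNIV. qh u w * G A w)" for u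
      have P0: "0 \<le> P u" for u unfolding P_def by (intro sum_nonneg mult_nonneg_nonneg qhn G0)
      have P1: "0 \<le> 1 - P u" for u
      proof -
        have "P u \<le> (\<Sum>w\<in>UNIV. qh u w)" unfolding P_def
          by (intro sum_mono) (simp add: G1 qhn mult_left_le)
        then show ?thesis using rsh[of u] by simp
      qed
      have id: "(\<Sum>u\<in>A. \<mu>h u * (1 - P u)) = (\<Sum>u\<in>S1-A. \<mu>h u * P u)"
        unfolding P_def by (rule stat_identity[OF AS GA GB Gharm_h[OF AS] invh])
      define Oh where "Oh = (\<Sum>u\<in>A. \<mu> u * (1 - P u))"
      define Ih where "Ih = (\<Sum>u\<in>S1-A. \<mu> u * P u)"
      have k: "Ih < \<rho> * Oh" "0 < Oh" using key[OF A] by (simp_all add: Oh_def Ih_def P_def)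
      have "lv * Oh \<le> (\<Sum>u\<in>A. \<mu>h u * (1 - P u))"
        unfolding Oh_def sum_distrib_left
      proof (rule sum_mono)
        fix u assume u: "u \<in> A"
        have "lv \<le> r u" using lam u by auto
        then have "lv * (\<mu> u * (1 - P u)) \<le> r u * (\<mu> u * (1 - P u))"
          using m0 P1 by (intro mult_right_mono mult_nonneg_nonneg) auto
        then show "lv * (\<mu> u * (1 - P u)) \<le> \<mu>h u * (1 - P u)" by (simp add: mhr mult.assoc)
      qed
      also have "\<dots> = (\<Sum>u\<in>S1-A. \<mu>h u * P u)" by (rule id)
      also have "\<dots> \<le> (\<Sum>u\<in>S1-A. (lv / \<rho>) * (\<mu> u * P u))"
      proof (rule sum_mono)
        fix u assume u: "u \<in> S1 - A"
        have "r u \<le> lv / \<rho>" using lt u rho1 by (simp add: le_divide_eq mult.commute less_imp_le)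
        then have "r u * (\<mu> u * P u) \<le> (lv / \<rho>) * (\<mu> u * P u)"
          using m0 P0 by (intro mult_right_mono) auto
        then show "\<mu>h u * P u \<le> (lv / \<rho>) * (\<mu> u * P u)" by (simp add: mhr mult.assoc)
      qed
      also have "\<dots> = (lv / \<rho>) * Ih" by (simp add: Ih_def sum_distrib_left)
      also have "\<dots> < (lv / \<rho>) * (\<rho> * Oh)" using k(1) lp rho1 by (intro mult_strict_left_mono) auto
      also have "\<dots> = lv * Oh" using rho1 by simp
      finally show False by simp
    qed
    have ind: "k < card S1 \<Longrightarrow> \<exists>B\<subseteq>S1. k < card B \<and> (\<forall>u\<in>B. M \<le> \<rho> ^ k * r u)" for k
    proof (induction k)
      case 0
      obtain um where um: "um \<in> S1" "r um = M" using Min by auto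
      show ?case by (rule exI[of _ "{um}"]) (use um in auto)
    next
      case (Suc k)
      then obtain B where B: "B \<subseteq> S1" "k < card B" "\<forall>u\<in>B. M \<le> \<rho> ^ k * r u" by auto
      define A where "A = {u\<in>S1. M \<le> \<rho> ^ k * r u}"
      have BA: "B \<subseteq> A" using B by (auto simp: A_def)
      have cA: "k < card A" using B(2) card_mono[OF _ BA] by (simp add: A_def) 
      have AS: "A \<subseteq> S1" by (auto simp: A_def)
      have mono: "M \<le> \<rho> ^ Suc k * r u" if "M \<le> \<rho> ^ k * r u" for u
      proof -
        have "\<rho> ^ k * r u \<le> \<rho> ^ Suc k * r u"
          using rho1 r0[of u] by (intro mult_right_mono) (auto intro: power_increasing)
        then show ?thesis using that by linarith
      qed
      show ?case
      proof (cases "A = S1")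
        case True
        show ?thesis
          by (rule exI[of _ S1]) (use True Suc.prems mono in \<open>auto simp: A_def\<close>)
      next
        case False
        have Ane: "A \<noteq> {}" using cA by auto
        have Ass: "A \<subset> S1" using AS False by auto
        have rk: "0 < \<rho> ^ k" using rho1 by simp
        have "\<forall>u\<in>A. M / \<rho> ^ k \<le> r u" using rk by (auto simp: A_def divide_le_eq mult.commute)
        then obtain w where w: "w \<in> S1 - A" "M / \<rho> ^ k \<le> \<rho> * r w" using lstep[OF Ane Ass] by blast
        have wM: "M \<le> \<rho> ^ Suc k * r w" using w(2) rk by (simp add: divide_le_eq mult.commute mult.left_commute)
        have fA: "finite A" by simp
        show ?thesis
        proof (rule exI[of _ "insert w A"], intro conjI ballI)
          show "insert w A \<subseteq> S1" using AS w by auto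
          show "Suc k < card (insert w A)" using cA w fA by simp
        next
          fix u assume "u \<in> insert w A"
          then show "M \<le> \<rho> ^ Suc k * r u" using wM mono by (auto simp: A_def)
        qed
      qed
    qed
    define n1 where "n1 = card S1"
    have n1p: "0 < n1" using cS1 by (simp add: n1_def)
    obtain B where B: "B \<subseteq> S1" "n1 - 1 < card B" "\<forall>u\<in>B. M \<le> \<rho> ^ (n1 - 1) * r u"
      using ind[of "n1 - 1"] n1p by (auto simp: n1_def)
    have "B = S1"
      using B(1,2) card_mono[OF _ B(1)] card_subset_eq[OF _ B(1)] by (simp add: n1_def)
    then have lowr: "\<forall>u\<in>S1. M \<le> \<rho> ^ (n1 - 1) * r u" using B(3) by simp
    define K where "K = \<rho> ^ (n1 - 1)"
    have K1: "1 \<le> K" using rho1 by (simp add: K_def)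
    have Kp: "0 < K" using K1 by simp
    have lo: "M / K \<le> r u" if "u \<in> S1" for u using lowr that Kp by (simp add: K_def divide_le_eq mult.commute)
    define Sm where "Sm = (\<Sum>u\<in>S1. \<mu> u)"
    define Sh where "Sh = (\<Sum>u\<in>S1. \<mu>h u)"
    have Smp: "0 < Sm" unfolding Sm_def using s by (intro sum_pos2[of S1 s]) (auto simp: mp m0)
    have Shhi: "Sh \<le> M * Sm"
      unfolding Sh_def Sm_def sum_distrib_left by (rule sum_mono) (simp add: mhr rM m0 mult_right_mono)
    have Shlo: "(M / K) * Sm \<le> Sh"
      unfolding Sh_def Sm_def sum_distrib_left
    proof (rule sum_mono)
      fix u assume u: "u \<in> S1"
      have "(M / K) * \<mu> u \<le> r u * \<mu> u" using lo[OF u] m0[of u] by (rule mult_right_mono)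
      then show "M / K * \<mu> u \<le> \<mu>h u" by (simp add: mhr)
    qed
    have MKp: "0 < M / K" using Mp Kp by simp
    have Shp: "0 < Sh" proof -
      have "0 < (M / K) * Sm" using MKp Smp by (rule mult_pos_pos)
      then show ?thesis using Shlo by linarith
    qed
    define X where "X = (\<mu>h s / Sh) / (\<mu> s / Sm)"
    have Xeq: "X = r s * Sm / Sh" using mp[of s] by (simp add: X_def mhr field_simps)
    have Xhi: "X \<le> K"
    proof -
      have "r s * Sm \<le> M * Sm" using rM[OF s] Smp by (simp add: mult_right_mono)
      also have "\<dots> = K * ((M / K) * Sm)" using Kp by simp
      also have "\<dots> \<le> K * Sh" using Shlo Kp by (intro mult_left_mono) auto
      finally show ?thesis using Shp by (simp add: Xeq divide_le_eq mult.commute)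
    qed
    have Xlo: "1 / K \<le> X"
    proof -
      have "Sh \<le> M * Sm" by (rule Shhi)
      also have "\<dots> = K * ((M / K) * Sm)" using Kp by simp
      also have "\<dots> \<le> K * (r s * Sm)" using lo[OF s] Smp Kp by (intro mult_left_mono mult_right_mono) auto
      finally have "Sh \<le> K * (r s * Sm)" .
      then show ?thesis using Shp Kp by (simp add: Xeq divide_simps mult.commute)
    qed
    have "\<bar>1 - X\<bar> \<le> K - 1"
    proof -
      have "1 - 1 / K \<le> K - 1"
      proof -
        have "(2 - K) * K \<le> 1" using zero_le_power2[of "K - 1"] by (simp add: power2_eq_square algebra_simps)
        then have "1 / K \<ge> 2 - K" using Kp by (simp add: pos_le_divide_eq)
        then show ?thesis by linarith
      qed
      then show ?thesis using Xhi Xlo by (simp add: abs_le_iff)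
    qed
    also have "K - 1 \<le> 18 * \<beta> * L"
      unfolding K_def \<rho>_def
      by (rule final_num[OF b0 bN N2]) (use LN in \<open>simp_all add: n1_def N_def card_mono\<close>)
    finally show "\<bar>1 - (\<mu>h s / (\<Sum>u\<in>S1. \<mu>h u)) / (stat_dist q s / (\<Sum>u\<in>S1. stat_dist q u))\<bar>
           \<le> 18 * \<beta> * Lconst CARD('st)"
      by (simp add: X_def Sh_def Sm_def \<mu>_def L_def)
    qed
  qed
qed

end
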